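(* Let $X,Y$ be complex Banach spaces, $\emptyset\ne I\subseteq\mathbb R^n$, let $\mathcal B$ be a non-empty collection of non-empty subsets of $X$ such that every $x\in X$ belongs to some $B\in\mathcal B$, and let $\mathrm R$ be a non-empty collection of sequences in $\mathbb R^n$ such that $\mathbf t+\mathbf b(l)\in I$ whenever $\mathbf t\in I$, $\mathbf b\in\mathrm R$, $l\in\mathbb N$, and such that every subsequence of a sequence in $\mathrm R$ belongs to $\mathrm R$. Suppose that for each $j\in\mathbb N$ the function $F_j:I\times X\to Y$ is $(\mathrm R,\mathcal B)$-multi-almost periodic. If for each $B\in\mathcal B$ there exists $\epsilon_B>0$ such that $(F_j)$ converges uniformly to a function $F:I\times X\to Y$ on $I\times\bigl(B^{\circ}\cup\bigcup_{x\in\partial B}B(x,\epsilon_B)\bigr)$, then $F$ is $(\mathrm R,\mathcal B)$-multi-almost periodic.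
   Context: A continuous function $F:I\times X\to Y$ is called $(\mathrm R,\mathcal B)$-multi-almost periodic if for every $B\in\mathcal B$ and every sequence $(\mathbf b_k)\in\mathrm R$ there exist a subsequence $(\mathbf b_{k_l})$ and a function $F^\ast:I\times X\to Y$ such that $\lim_{l\to\infty}F(\mathbf t+\mathbf b_{k_l};x)=F^\ast(\mathbf t;x)$ uniformly for $x\in B$, $\mathbf t\in I$. $B^\circ$ and $\partial B$ denote the interior and boundary of $B$ in $X$, and $B(x,\epsilon)$ is the closed ball of radius $\epsilon$ centred at $x$. *)

theory Defs
  imports "HOL-Analysis.Analysis"
begin

definition multi_almost_periodic ::
  "(real^'n) set \<Rightarrow> (nat \<Rightarrow> real^'n) set \<Rightarrow> 'x::real_normed_vector set set
   \<Rightarrow> (real^'n \<Rightarrow> 'x \<Rightarrow> 'y::real_normed_vector) \<Rightarrow> bool" where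
  "multi_almost_periodic I R \<B> F \<longleftrightarrow>
     continuous_on (I \<times> UNIV) (\<lambda>(t, x). F t x) \<and>
     (\<forall>B\<in>\<B>. \<forall>b\<in>R. \<exists>r Fstar. strict_mono r \<and>
        uniform_limit (I \<times> B) (\<lambda>l (t, x). F (t + b (r l)) x) (\<lambda>(t, x). Fstar t x) sequentially)"

end

theory Submission
  imports Defs "HOL-Library.Diagonal_Subsequence"
begin

lemma ucauchy_subseq:
  assumes "uniformly_Cauchy_on X f" "strict_mono r"
  shows "uniformly_Cauchy_on X (f \<circ> r)"
  unfolding uniformly_Cauchy_on_def
proof (intro allI impI)
  fix e :: real assume "e > 0"
  then obtain M where M: "\<forall>x\<in>X. \<forall>m\<ge>M. \<forall>n\<ge>M. dist (f m x) (f n x) < e"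
    using assms(1) unfolding uniformly_Cauchy_on_def by blast
  have "\<forall>x\<in>X. \<forall>m\<ge>M. \<forall>n\<ge>M. dist ((f \<circ> r) m x) ((f \<circ> r) n x) < e"
  proof (intro ballI allI impI)
    fix x m n assume "x \<in> X" "m \<ge> M" "n \<ge> M"
    moreover have "r m \<ge> M" "r n \<ge> M"
      using seq_suble[OF assms(2), of m] seq_suble[OF assms(2), of n] \<open>m \<ge> M\<close> \<open>n \<ge> M\<close> by linarith+
    ultimately show "dist ((f \<circ> r) m x) ((f \<circ> r) n x) < e" using M by simp
  qed
  then show "\<exists>M. \<forall>x\<in>X. \<forall>m\<ge>M. \<forall>n\<ge>M. dist ((f \<circ> r) m x) ((f \<circ> r) n x) < e" by blast
qed

lemma ucauchy_shift:
  assumes "uniformly_Cauchy_on X (f \<circ> ((+) k))"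
  shows "uniformly_Cauchy_on X f"
  unfolding uniformly_Cauchy_on_def
proof (intro allI impI)
  fix e :: real assume "e > 0"
  then obtain M where M: "\<forall>x\<in>X. \<forall>m\<ge>M. \<forall>n\<ge>M. dist (f (k + m) x) (f (k + n) x) < e"
    using assms(1) unfolding uniformly_Cauchy_on_def by auto
  have "\<forall>x\<in>X. \<forall>m\<ge>M + k. \<forall>n\<ge>M + k. dist (f m x) (f n x) < e"
  proof (intro ballI allI impI)
    fix x m n assume "x \<in> X" "m \<ge> M + k" "n \<ge> M + k"
    then show "dist (f m x) (f n x) < e"
      using M[rule_format, of x "m - k" "n - k"] by simp
  qed
  then show "\<exists>M. \<forall>x\<in>X. \<forall>m\<ge>M. \<forall>n\<ge>M. dist (f m x) (f n x) < e" by blast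
qed

theorem proposition2p8:
  fixes I :: "(real^'n) set"
    and R :: "(nat \<Rightarrow> real^'n) set"
    and \<B> :: "'x::banach set set"
    and Fs :: "nat \<Rightarrow> real^'n \<Rightarrow> 'x \<Rightarrow> 'y::banach"
    and F :: "real^'n \<Rightarrow> 'x \<Rightarrow> 'y"
  assumes "I \<noteq> {}"
    and "\<B> \<noteq> {}"
    and "\<forall>B\<in>\<B>. B \<noteq> {}"
    and "\<forall>x. \<exists>B\<in>\<B>. x \<in> B"
    and "R \<noteq> {}"
    and "\<forall>t\<in>I. \<forall>b\<in>R. \<forall>l. t + b l \<in> I"
    and "\<forall>b\<in>R. \<forall>r. strict_mono r \<longrightarrow> b \<circ> r \<in> R"
    and "\<forall>j. multi_almost_periodic I R \<B> (Fs j)"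
    and "\<forall>B\<in>\<B>. \<exists>\<epsilon>>0. uniform_limit
            (I \<times> (interior B \<union> (\<Union>x\<in>frontier B. cball x \<epsilon>)))
            (\<lambda>j (t, x). Fs j t x) (\<lambda>(t, x). F t x) sequentially"
  shows "multi_almost_periodic I R \<B> F"
proof -
  note mp = assms(8)[unfolded multi_almost_periodic_def]
  have cont: "continuous_on (I \<times> UNIV) (\<lambda>(t, x). F t x)"
    unfolding continuous_on_eq_continuous_within
  proof
    fix p assume p: "p \<in> I \<times> (UNIV :: 'x set)"
    obtain t x where ptx: "p = (t, x)" by fastforce
    obtain B where B: "B \<in> \<B>" "x \<in> B" using assms(4) by blast
    obtain \<epsilon> where eps: "\<epsilon> > 0" and ul: "uniform_limit
            (I \<times> (interior B \<union> (\<Union>x\<in>frontier B. cball x \<epsilon>)))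
            (\<lambda>j (t, x). Fs j t x) (\<lambda>(t, x). F t x) sequentially"
      using assms(9) B(1) by blast
    obtain U where U: "open U" "x \<in> U" "U \<subseteq> interior B \<union> (\<Union>x\<in>frontier B. cball x \<epsilon>)"
    proof (cases "x \<in> interior B")
      case True
      then show ?thesis using that[of "interior B"] by auto
    next
      case False
      then have "x \<in> frontier B" using B(2) closure_subset unfolding frontier_def by blast
      have "ball x \<epsilon> \<subseteq> interior B \<union> (\<Union>x\<in>frontier B. cball x \<epsilon>)"
        using \<open>x \<in> frontier B\<close> by auto
      then show ?thesis using that[of "ball x \<epsilon>"] eps by auto
    qed
    have "continuous_on (I \<times> U) (\<lambda>(t, x). F t x)"
    proof (rule uniform_limit_theorem[where f="\<lambda>j (t, x). Fs j t x"])
      show "\<forall>\<^sub>F n in sequentially. continuous_on (I \<times> U) (\<lambda>(t, x). Fs n t x)"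
      proof (intro always_eventually allI)
        fix n
        have "continuous_on (I \<times> UNIV) (\<lambda>(t, x). Fs n t x)" using mp by blast
        then show "continuous_on (I \<times> U) (\<lambda>(t, x). Fs n t x)"
          by (rule continuous_on_subset) auto
      qed
      show "uniform_limit (I \<times> U) (\<lambda>j (t, x). Fs j t x) (\<lambda>(t, x). F t x) sequentially"
        by (rule uniform_limit_on_subset[OF ul]) (use U(3) in auto)
    qed simp
    then have "continuous (at p within I \<times> U) (\<lambda>(t, x). F t x)"
      using p U(2) ptx by (simp add: continuous_on_eq_continuous_within)
    moreover have "at p within I \<times> U = at p within I \<times> UNIV"
      by (rule at_within_nhd[where S="UNIV \<times> U"]) (use U ptx in \<open>auto simp: open_Times\<close>)
    ultimately show "continuous (at p within I \<times> UNIV) (\<lambda>(t, x). F t x)" by simp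
  qed
  have ap: "\<exists>r Fstar. strict_mono r \<and>
        uniform_limit (I \<times> B) (\<lambda>l (t, x). F (t + b (r l)) x) (\<lambda>(t, x). Fstar t x) sequentially"
    if B: "B \<in> \<B>" and b: "b \<in> R" for B b
  proof -
    define P where "P = (\<lambda>j (s :: nat \<Rightarrow> nat).
        uniformly_Cauchy_on (I \<times> B) (\<lambda>l (t, x). Fs j (t + b (s l)) x))"
    interpret subseqs P
    proof
      fix n and s :: "nat \<Rightarrow> nat" assume s: "strict_mono s"
      then have "b \<circ> s \<in> R" using assms(7) b by blast
      then obtain r Fstar where r: "strict_mono r"
        "uniform_limit (I \<times> B) (\<lambda>l (t, x). Fs n (t + (b \<circ> s) (r l)) x) (\<lambda>(t, x). Fstar t x) sequentially"
        using mp B by blast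
      then have "uniformly_Cauchy_on (I \<times> B) (\<lambda>l (t, x). Fs n (t + (b \<circ> s) (r l)) x)"
        using uniformly_convergent_Cauchy uniformly_convergent_on_def by blast
      then show "\<exists>r'. strict_mono r' \<and> P n (s \<circ> r')"
        using r(1) unfolding P_def by (auto simp: o_def)
    qed
    have Pd: "P j diagseq" for j
    proof -
      have "P j (diagseq \<circ> ((+) (Suc j)))"
      proof (rule diagseq_holds)
        fix r s n assume "strict_mono (r :: nat \<Rightarrow> nat)" "P n s"
        then show "P n (s \<circ> r)" unfolding P_def
          using ucauchy_subseq[of "I \<times> B" "\<lambda>l (t, x). Fs n (t + b (s l)) x" r]
          by (simp add: o_def)
      qed
      moreover have "(\<lambda>l (t, x). Fs j (t + b ((diagseq \<circ> (+) (Suc j)) l)) x) =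
          (\<lambda>l (t, x). Fs j (t + b (diagseq l)) x) \<circ> (+) (Suc j)"
        by (simp only: comp_def)
      ultimately show ?thesis unfolding P_def
        by (metis ucauchy_shift)
    qed
    obtain \<epsilon> where eps: "\<epsilon> > 0" and ul: "uniform_limit
            (I \<times> (interior B \<union> (\<Union>x\<in>frontier B. cball x \<epsilon>)))
            (\<lambda>j (t, x). Fs j t x) (\<lambda>(t, x). F t x) sequentially"
      using assms(9) B by blast
    have BS: "B \<subseteq> interior B \<union> (\<Union>x\<in>frontier B. cball x \<epsilon>)"
    proof
      fix x assume x: "x \<in> B"
      show "x \<in> interior B \<union> (\<Union>x\<in>frontier B. cball x \<epsilon>)"
      proof (cases "x \<in> interior B")
        case False
        then have "x \<in> frontier B" using x closure_subset unfolding frontier_def by blast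
        then have "x \<in> cball x \<epsilon>" using eps by simp
        then show ?thesis using \<open>x \<in> frontier B\<close> by blast
      qed simp
    qed
    have "uniformly_Cauchy_on (I \<times> B) (\<lambda>l (t, x). F (t + b (diagseq l)) x)"
    proof (rule uniformly_Cauchy_onI)
      fix e :: real assume e: "e > 0"
      then have "\<forall>\<^sub>F j in sequentially. \<forall>p \<in> I \<times> (interior B \<union> (\<Union>x\<in>frontier B. cball x \<epsilon>)).
          dist ((\<lambda>(t, x). Fs j t x) p) ((\<lambda>(t, x). F t x) p) < e / 3"
        using ul unfolding uniform_limit_iff by (meson divide_pos_pos zero_less_numeral)
      then obtain j where j: "\<forall>p \<in> I \<times> (interior B \<union> (\<Union>x\<in>frontier B. cball x \<epsilon>)).
          dist ((\<lambda>(t, x). Fs j t x) p) ((\<lambda>(t, x). F t x) p) < e / 3"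
        using eventually_sequentially by auto
      obtain M where M: "\<forall>p\<in>I \<times> B. \<forall>m\<ge>M. \<forall>n\<ge>M.
          dist ((\<lambda>(t, x). Fs j (t + b (diagseq m)) x) p) ((\<lambda>(t, x). Fs j (t + b (diagseq n)) x) p) < e / 3"
        using Pd[of j] e unfolding P_def uniformly_Cauchy_on_def
        by (meson divide_pos_pos zero_less_numeral)
      have "\<forall>p\<in>I \<times> B. \<forall>m\<ge>M. \<forall>n\<ge>M.
          dist ((\<lambda>(t, x). F (t + b (diagseq m)) x) p) ((\<lambda>(t, x). F (t + b (diagseq n)) x) p) < e"
      proof (intro ballI allI impI)
        fix p m n assume p: "p \<in> I \<times> B" and mn: "m \<ge> M" "n \<ge> M"
        obtain t x where ptx: "p = (t, x)" by fastforce
        have t: "t \<in> I" "x \<in> B" using p ptx by auto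
        have tm: "t + b (diagseq m) \<in> I" and tn: "t + b (diagseq n) \<in> I"
          using assms(6) t b by auto
        have d1: "dist (Fs j (t + b (diagseq m)) x) (F (t + b (diagseq m)) x) < e / 3"
          using j tm t(2) BS by fastforce
        have d2: "dist (Fs j (t + b (diagseq n)) x) (F (t + b (diagseq n)) x) < e / 3"
          using j tn t(2) BS by fastforce
        have d3: "dist (Fs j (t + b (diagseq m)) x) (Fs j (t + b (diagseq n)) x) < e / 3"
          using M p ptx mn by fastforce
        have "dist (F (t + b (diagseq m)) x) (F (t + b (diagseq n)) x)
            \<le> dist (F (t + b (diagseq m)) x) (Fs j (t + b (diagseq m)) x)
              + dist (Fs j (t + b (diagseq m)) x) (Fs j (t + b (diagseq n)) x)
              + dist (Fs j (t + b (diagseq n)) x) (F (t + b (diagseq n)) x)"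
          by (smt (verit) dist_triangle)
        also have "\<dots> < e" using d1 d2 d3 by (simp add: dist_commute)
        finally show "dist ((\<lambda>(t, x). F (t + b (diagseq m)) x) p) ((\<lambda>(t, x). F (t + b (diagseq n)) x) p) < e"
          using ptx by simp
      qed
      then show "\<exists>M. \<forall>p\<in>I \<times> B. \<forall>m\<ge>M. \<forall>n\<ge>M.
          dist ((\<lambda>(t, x). F (t + b (diagseq m)) x) p) ((\<lambda>(t, x). F (t + b (diagseq n)) x) p) < e"
        by blast
    qed
    then obtain g where g: "uniform_limit (I \<times> B) (\<lambda>l (t, x). F (t + b (diagseq l)) x) g sequentially"
      using Cauchy_uniformly_convergent uniformly_convergent_on_def by blast
    have "g = (\<lambda>(t, x). (\<lambda>t x. g (t, x)) t x)" by auto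
    then show ?thesis using g subseq_diagseq by metis
  qed
  show ?thesis unfolding multi_almost_periodic_def using cont ap by blast
qed

end
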